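(* There exists $r_0>0$ such that $\widehat{M}(r)\neq 0$ for all $r>r_0$, where $\widehat M$ is the function defined in the context.
   Context: For $r>\frac23$ let $u_b(r)\in(\frac65,\frac43)$ be the unique $u\in(\frac65,\frac43)$ with $2-u+2q(1-u)=0$ at $q=1+\sqrt{\frac{r+u-2}{r+0.1}}$. Set $q_{f,\pm}(r)=1\pm\sqrt{\frac{r}{r+0.1}}$, $q_{b,\pm}(r)=1\pm\sqrt{\frac{r+u_b(r)-2}{r+0.1}}$, $S(r)=(q_{f,+}-2q_{f,-})+(q_{b,+}-2q_{b,-})$, and let $(D_0(r),\mu_0(r))$ with $D_0(r)>0$ be the solution of $2+\mu=\tfrac12\sqrt{2D(r+0.1)}\,(q_{f,+}(r)-2q_{f,-}(r))$, $u_b(r)+\mu=-\tfrac12\sqrt{2D(r+0.1)}\,(q_{b,+}(r)-2q_{b,-}(r))$, i.e. $D_0=\frac{2(2-u_b)^2}{(r+0.1)S^2}$, $\mu_0=-2+\frac{(2-u_b)(q_{f,+}-2q_{f,-})}{S}$. Let $\phi(\chi)=\big(1+e^{-\frac{\sqrt2}{2}\chi}\big)^{-1}$, and for $j\in\{f,b\}$ let $\kappa_j=\frac12-\frac{q_{j,-}}{q_{j,+}}$, $I_j=\int_{-\infty}^{\infty}e^{-\sqrt2\kappa_j\chi}\phi'(\chi)^2d\chi$, $J_j^{(m)}=\int_{-\infty}^{\infty}e^{-\sqrt2\kappa_j\chi}\phi'(\chi)\phi(\chi)^m d\chi$ ($m=1,2,3$), all quantities depending on $r$. Define $\widehat M_f=-\frac{q_{f,+}D_0\sqrt2(q_{f,+}-2q_{f,-})}{2(\mu_0+2)}I_f$,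 $M_f=\frac{q_{f,+}}{2}\sqrt2(q_{f,+}-2q_{f,-})I_f+\frac{0.1}{r+0.1}J_f^{(1)}-2q_{f,+}J_f^{(2)}+q_{f,+}^2J_f^{(3)}$, $\widehat M_b=-\frac{q_{b,+}\sqrt2(q_{b,+}-2q_{b,-})}{2(\mu_0+u_b)}I_b$, $M_b=-\frac{q_{b,+}}{2}\sqrt2(q_{b,+}-2q_{b,-})I_b+\frac{u_b-2.1}{r+0.1}J_b^{(1)}+2q_{b,+}J_b^{(2)}-q_{b,+}^2J_b^{(3)}$, and $\widehat M(r)=\frac{M_b(r)}{\widehat M_b(r)}-\frac{M_f(r)}{\widehat M_f(r)}$. ($\widehat M$ is, up to a nonzero factor, the determinant of the Jacobian with respect to $(D,\mu)$ of the Melnikov functions measuring the splitting of the front and back connections in the Barkley traveling-wave system.) *)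

theory Defs
  imports "HOL-Analysis.Analysis"
begin

definition q_b_of :: "real \<Rightarrow> real \<Rightarrow> real" where
  "q_b_of r u = 1 + sqrt ((r + u - 2) / (r + 1/10))"

definition u_b :: "real \<Rightarrow> real" where
  "u_b r = (THE u. 6/5 < u \<and> u < 4/3 \<and> 2 - u + 2 * q_b_of r u * (1 - u) = 0)"

definition qfp :: "real \<Rightarrow> real" where "qfp r = 1 + sqrt (r / (r + 1/10))"
definition qfm :: "real \<Rightarrow> real" where "qfm r = 1 - sqrt (r / (r + 1/10))"
definition qbp :: "real \<Rightarrow> real" where "qbp r = 1 + sqrt ((r + u_b r - 2) / (r + 1/10))"
definition qbm :: "real \<Rightarrow> real" where "qbm r = 1 - sqrt ((r + u_b r - 2) / (r + 1/10))"

definition Sfun :: "real \<Rightarrow> real" where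
  "Sfun r = (qfp r - 2 * qfm r) + (qbp r - 2 * qbm r)"

definition D0 :: "real \<Rightarrow> real" where
  "D0 r = 2 * (2 - u_b r)^2 / ((r + 1/10) * (Sfun r)^2)"

definition mu0 :: "real \<Rightarrow> real" where
  "mu0 r = -2 + (2 - u_b r) * (qfp r - 2 * qfm r) / Sfun r"

definition phi :: "real \<Rightarrow> real" where
  "phi x = inverse (1 + exp (- (sqrt 2 / 2) * x))"

definition phi' :: "real \<Rightarrow> real" where
  "phi' = deriv phi"

definition kappa :: "real \<Rightarrow> real \<Rightarrow> real" where
  "kappa qp qm = 1/2 - qm / qp"

definition Iint :: "real \<Rightarrow> real" where
  "Iint k = (LINT x|lborel. exp (- sqrt 2 * k * x) * (phi' x)^2)"

definition Jint :: "nat \<Rightarrow> real \<Rightarrow> real" where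
  "Jint m k = (LINT x|lborel. exp (- sqrt 2 * k * x) * phi' x * (phi x)^m)"

definition kf :: "real \<Rightarrow> real" where "kf r = kappa (qfp r) (qfm r)"
definition kb :: "real \<Rightarrow> real" where "kb r = kappa (qbp r) (qbm r)"

definition Mhat_f :: "real \<Rightarrow> real" where
  "Mhat_f r = - (qfp r * D0 r * sqrt 2 * (qfp r - 2 * qfm r)) / (2 * (mu0 r + 2)) * Iint (kf r)"

definition M_f :: "real \<Rightarrow> real" where
  "M_f r = qfp r / 2 * sqrt 2 * (qfp r - 2 * qfm r) * Iint (kf r)
         + (1/10) / (r + 1/10) * Jint 1 (kf r)
         - 2 * qfp r * Jint 2 (kf r)
         + (qfp r)^2 * Jint 3 (kf r)"

definition Mhat_b :: "real \<Rightarrow> real" where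
  "Mhat_b r = - (qbp r * sqrt 2 * (qbp r - 2 * qbm r)) / (2 * (mu0 r + u_b r)) * Iint (kb r)"

definition M_b :: "real \<Rightarrow> real" where
  "M_b r = - (qbp r / 2) * sqrt 2 * (qbp r - 2 * qbm r) * Iint (kb r)
         + (u_b r - 21/10) / (r + 1/10) * Jint 1 (kb r)
         + 2 * qbp r * Jint 2 (kb r)
         - (qbp r)^2 * Jint 3 (kb r)"

definition Mhat :: "real \<Rightarrow> real" where
  "Mhat r = M_b r / Mhat_b r - M_f r / Mhat_f r"

end

theory Submission
  imports Defs "HOL-Real_Asymp.Real_Asymp"
begin


lemma phi_alt: "phi x = 1 / (1 + exp (- (sqrt 2 / 2) * x))"
  unfolding phi_def by (simp add: inverse_eq_divide)

lemma phi_pos: "0 < phi x" "phi x < 1"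
proof -
  define e where "e = exp (- (sqrt 2 / 2) * x)"
  have h: "0 < e" unfolding e_def by simp
  show "0 < phi x" unfolding phi_alt e_def[symmetric] using h by simp
  show "phi x < 1" unfolding phi_alt e_def[symmetric] using h by (simp add: field_simps)
qed

lemma phi_deriv: "(phi has_real_derivative (sqrt 2/2) * phi x * (1 - phi x)) (at x)"
proof -
  define e where "e = exp (- (sqrt 2 / 2) * x)"
  have e: "0 < e" unfolding e_def by simp
  have ne: "1 + exp (- (sqrt 2 / 2) * x) \<noteq> 0" by (smt (verit) exp_gt_zero)
  have d: "(phi has_real_derivative
     - (inverse (1 + e) * (0 + e * (0 * x + 1 * - (sqrt 2 / 2))) * inverse (1 + e))) (at x)"
    unfolding e_def phi_def
    by (rule derivative_eq_intros refl ne)+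
  have eq: "- (inverse (1 + e) * (0 + e * (0 * x + 1 * - (sqrt 2 / 2))) * inverse (1 + e))
     = (sqrt 2/2) * phi x * (1 - phi x)"
    unfolding phi_alt e_def[symmetric] using e by (simp add: field_simps)
  show ?thesis using DERIV_cong[OF d eq] .
qed

lemma phi'_eq: "phi' x = (sqrt 2/2) * phi x * (1 - phi x)"
  unfolding phi'_def using phi_deriv by (rule DERIV_imp_deriv)

definition psi :: "real \<Rightarrow> real" where "psi s = ln (s / (1 - s)) / (sqrt 2 / 2)"

lemma phi_psi: assumes "0 < s" "s < 1" shows "phi (psi s) = s"
proof -
  have h: "exp (- (sqrt 2 / 2) * psi s) = (1 - s) / s"
    using assms unfolding psi_def by (simp add: exp_minus)
  have "phi (psi s) = 1 / (1 + (1 - s) / s)" unfolding phi_alt h ..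
  thus ?thesis using assms by (simp add: field_simps)
qed

definition psi' :: "real \<Rightarrow> real" where "psi' s = 1 / ((sqrt 2 / 2) * s * (1 - s))"

lemma psi_deriv: assumes "0 < s" "s < 1" shows "(psi has_real_derivative psi' s) (at s)"
proof -
  have d1: "((\<lambda>s. s / (1 - s)) has_real_derivative 1 / (1 - s)^2) (at s)"
  proof -
    have "((\<lambda>s. s / (1 - s)) has_real_derivative (1 * (1 - s) - s * (0 - 1)) / ((1 - s) * (1 - s))) (at s)"
      using assms by (intro DERIV_divide derivative_intros) auto
    moreover have "(1 * (1 - s) - s * (0 - 1)) / ((1 - s) * (1 - s)) = 1 / (1 - s)^2"
      by (simp add: power2_eq_square)
    ultimately show ?thesis by simp
  qed
  have d2: "(ln has_real_derivative 1 / (s / (1 - s))) (at (s / (1 - s)))"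
    using assms by (intro DERIV_ln_divide) auto
  have d3: "((\<lambda>s. ln (s / (1 - s))) has_real_derivative 1 / (s / (1 - s)) * (1 / (1 - s)^2)) (at s)"
    using DERIV_chain2[OF d2 d1] .
  have d4: "(psi has_real_derivative 1 / (s / (1 - s)) * (1 / (1 - s)^2) / (sqrt 2 / 2)) (at s)"
    unfolding psi_def using DERIV_cdivide[OF d3] .
  have ne: "1 - s \<noteq> 0" "s \<noteq> 0" using assms by auto
  have "1 / (s / (1 - s)) * (1 / (1 - s)^2) = 1 / (s * (1 - s))"
    using ne by (simp add: power2_eq_square)
  hence "1 / (s / (1 - s)) * (1 / (1 - s)^2) / (sqrt 2 / 2) = psi' s"
    unfolding psi'_def by (simp add: ac_simps)
  with d4 show ?thesis by simp
qed

lemma psi_lim_bot: "filterlim psi at_bot (at_right 0)"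
  unfolding psi_def by real_asymp

lemma psi_lim_top: "filterlim psi at_top (at_left 1)"
  unfolding psi_def by real_asymp

lemma phi_powr_integral:
  fixes \<alpha> \<beta> :: real
  assumes "0 < \<alpha>" "0 < \<beta>"
  shows "integrable lborel (\<lambda>x. phi x powr \<alpha> * (1 - phi x) powr \<beta>)"
    and "(LINT x|lborel. phi x powr \<alpha> * (1 - phi x) powr \<beta>) = Beta \<alpha> \<beta> / (sqrt 2 / 2)"
proof -
  define f where "f x = phi x powr \<alpha> * (1 - phi x) powr \<beta>" for x
  define B0 where "B0 s = s powr (\<alpha> - 1) * (1 - s) powr (\<beta> - 1)" for s :: real
  have pt: "f (psi s) * psi' s = B0 s / (sqrt 2 / 2)" if "0 < s" "s < 1" for s
  proof -
    have "f (psi s) * psi' s = s powr \<alpha> * (1 - s) powr \<beta> / ((sqrt 2 / 2) * s * (1 - s))"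
      unfolding f_def psi'_def phi_psi[OF that] by simp
    also have "\<dots> = (s powr \<alpha> / s) * ((1 - s) powr \<beta> / (1 - s)) / (sqrt 2 / 2)"
      by (simp add: field_simps)
    also have "\<dots> = B0 s / (sqrt 2 / 2)"
      unfolding B0_def using that by (simp add: powr_diff)
    finally show ?thesis .
  qed
  have iB: "set_integrable lborel {0..1} B0"
    unfolding B0_def using integrable_Beta[OF assms] .
  have iB': "set_integrable lborel (einterval 0 1) B0"
    by (rule set_integrable_subset[OF iB]) (auto simp: zero_ereal_def one_ereal_def)
  have ifg: "set_integrable lborel (einterval 0 1) (\<lambda>s. f (psi s) * psi' s)"
  proof -
    have "set_integrable lborel (einterval 0 1) (\<lambda>s. B0 s / (sqrt 2 / 2))"
      using iB' by (rule set_integrable_divide)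
    moreover have "set_integrable lborel (einterval 0 1) (\<lambda>s. f (psi s) * psi' s) =
          set_integrable lborel (einterval 0 1) (\<lambda>s. B0 s / (sqrt 2 / 2))"
      by (rule set_integrable_cong) (auto simp: zero_ereal_def one_ereal_def pt)
    ultimately show ?thesis by simp
  qed
  have contf: "isCont f x" for x
    unfolding f_def using phi_pos[of x]
    by (intro continuous_intros DERIV_isCont[OF phi_deriv]) auto
  have sub: "set_integrable lborel (einterval (-\<infinity>) \<infinity>) f"
     "(LBINT x=-\<infinity>..\<infinity>. f x) = (LBINT s=0..1. f (psi s) * psi' s)"
  proof -
    note th = interval_integral_substitution_nonneg[of 0 1 psi psi' f "-\<infinity>" "\<infinity>"]
    have c1: "\<And>x. 0 < ereal x \<Longrightarrow> ereal x < 1 \<Longrightarrow> DERIV psi x :> psi' x"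
      by (rule psi_deriv) (auto simp: zero_ereal_def one_ereal_def)
    have c2: "\<And>x. 0 < ereal x \<Longrightarrow> ereal x < 1 \<Longrightarrow> isCont psi' x"
      unfolding psi'_def by (intro continuous_intros) (auto simp: zero_ereal_def one_ereal_def)
    have c3: "\<And>x. 0 < ereal x \<Longrightarrow> ereal x < 1 \<Longrightarrow> 0 \<le> f (psi x)"
      unfolding f_def by simp
    have c4: "\<And>x. 0 \<le> ereal x \<Longrightarrow> ereal x \<le> 1 \<Longrightarrow> 0 \<le> psi' x"
      unfolding psi'_def by (auto simp: zero_ereal_def one_ereal_def)
    have c5: "((ereal \<circ> psi \<circ> real_of_ereal) \<longlongrightarrow> - \<infinity>) (at_right 0)"
      unfolding zero_ereal_def using psi_lim_bot
      by (simp add: ereal_tendsto_simps flip: comp_assoc)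
    have c6: "((ereal \<circ> psi \<circ> real_of_ereal) \<longlongrightarrow> \<infinity>) (at_left 1)"
      unfolding one_ereal_def using psi_lim_top
      by (simp add: ereal_tendsto_simps flip: comp_assoc)
    have ifg': "set_integrable lborel (einterval 0 1) (\<lambda>x. f (psi x) * psi' x)" using ifg .
    show "set_integrable lborel (einterval (-\<infinity>) \<infinity>) f"
      using th(1)[OF _ c1 contf c2 c3 c4 c5 c6 ifg'] by simp
    show "(LBINT x=-\<infinity>..\<infinity>. f x) = (LBINT s=0..1. f (psi s) * psi' s)"
      using th(2)[OF _ c1 contf c2 c3 c4 c5 c6 ifg'] by simp
  qed
  show "integrable lborel (\<lambda>x. phi x powr \<alpha> * (1 - phi x) powr \<beta>)"
    using sub(1) unfolding f_def set_integrable_def by simp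
  have "(LBINT s=0..1. f (psi s) * psi' s) = (LBINT s=0..1. B0 s / (sqrt 2 / 2))"
    by (rule interval_integral_cong) (auto simp: zero_ereal_def one_ereal_def pt)
  also have "\<dots> = (LBINT s=0..1. B0 s) / (sqrt 2 / 2)"
    by simp
  also have "(LBINT s=0..1. B0 s) = integral {0..1} B0"
    using interval_integral_eq_integral[of 0 1 B0] iB by (simp add: zero_ereal_def one_ereal_def)
  also have "integral {0..1} B0 = Beta \<alpha> \<beta>"
    unfolding B0_def using has_integral_Beta_real[OF assms] by (rule integral_unique)
  finally have "(LBINT x=-\<infinity>..\<infinity>. f x) = Beta \<alpha> \<beta> / (sqrt 2 / 2)" using sub(2) by simp
  thus "(LINT x|lborel. phi x powr \<alpha> * (1 - phi x) powr \<beta>) = Beta \<alpha> \<beta> / (sqrt 2 / 2)"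
    unfolding f_def by (simp add: interval_lebesgue_integral_def set_lebesgue_integral_def)
qed


lemma exp_phi: "exp (- sqrt 2 * k * x) = phi x powr (- (2*k)) * (1 - phi x) powr (2*k)"
proof -
  have h: "(1 - phi x) / phi x = exp (- (sqrt 2 / 2) * x)"
  proof -
    define e where "e = exp (- (sqrt 2 / 2) * x)"
    have e: "0 < e" unfolding e_def by simp
    show ?thesis unfolding phi_alt e_def[symmetric] using e by (simp add: field_simps)
  qed
  have "phi x powr (- (2*k)) * (1 - phi x) powr (2*k) = (1 - phi x) powr (2*k) / phi x powr (2*k)"
    by (simp add: powr_minus divide_inverse mult.commute)
  also have "\<dots> = ((1 - phi x) / phi x) powr (2*k)"
    by (rule powr_divide[symmetric])
  also have "\<dots> = exp (- sqrt 2 * k * x)"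
    unfolding h exp_powr_real by (simp add: algebra_simps)
  finally show ?thesis by simp
qed

lemma pos_not_nonpos_Int: "0 < (y::real) \<Longrightarrow> y \<notin> \<int>\<^sub>\<le>\<^sub>0"
  by (auto dest: nonpos_Ints_nonpos)

lemma Beta_pos: "0 < a \<Longrightarrow> 0 < b \<Longrightarrow> 0 < Beta a (b::real)"
  unfolding Beta_def by (simp add: add_pos_pos)

lemma sq_div: "(c::real) \<noteq> 0 \<Longrightarrow> c^2 * (B / c) = c * B"
  by (simp add: power2_eq_square)

lemma Iint_Beta:
  assumes "-1 < 2*k" "2*k < 1"
  shows "Iint k = (sqrt 2 / 2) * Beta (2 - 2*k) (2 + 2*k)"
proof -
  have pw: "exp (- sqrt 2 * k * x) * (phi' x)^2 =
     (sqrt 2 / 2)^2 * (phi x powr (2 - 2*k) * (1 - phi x) powr (2 + 2*k))" for x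
  proof -
    have p1: "0 < phi x" "0 < 1 - phi x" using phi_pos[of x] by auto
    have a1: "phi x powr (2 - 2*k) = phi x powr (- (2*k)) * (phi x * phi x)"
      using p1 powr_add[of "phi x" "- (2*k)" 2] by (simp add: powr_numeral power2_eq_square)
    have a2: "(1 - phi x) powr (2 + 2*k) = (1 - phi x) powr (2*k) * ((1 - phi x) * (1 - phi x))"
      using p1 powr_add[of "1 - phi x" 2 "2*k"] by (simp add: powr_numeral power2_eq_square mult.commute)
    show ?thesis
      unfolding exp_phi phi'_eq a1 a2 power2_eq_square by (simp add: mult_ac)
  qed
  have "Iint k = (sqrt 2 / 2)^2 * (LINT x|lborel. phi x powr (2 - 2*k) * (1 - phi x) powr (2 + 2*k))"
    unfolding Iint_def pw by simp
  also have "\<dots> = (sqrt 2 / 2)^2 * (Beta (2 - 2*k) (2 + 2*k) / (sqrt 2 / 2))"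
    using assms by (subst phi_powr_integral(2)) auto
  also have "\<dots> = (sqrt 2 / 2) * Beta (2 - 2*k) (2 + 2*k)"
    by (rule sq_div) simp
  finally show ?thesis .
qed

lemma Jint_Beta:
  assumes "-1 < 2*k" "2*k < 1"
  shows "Jint m k = Beta (real m + 1 - 2*k) (1 + 2*k)"
proof -
  have pw: "exp (- sqrt 2 * k * x) * phi' x * (phi x)^m =
     (sqrt 2 / 2) * (phi x powr (real m + 1 - 2*k) * (1 - phi x) powr (1 + 2*k))" for x
  proof -
    have p1: "0 < phi x" "0 < 1 - phi x" using phi_pos[of x] by auto
    have a0: "phi x powr (1 + real m) = phi x ^ m * phi x"
      using powr_realpow[of "phi x" "Suc m"] p1 by (simp add: mult.commute)
    have e: "real m + 1 - 2*k = - (2*k) + (1 + real m)" by simp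
    have a1: "phi x powr (real m + 1 - 2*k) = phi x powr (- (2*k)) * (phi x ^ m * phi x)"
      by (simp only: e powr_add[of "phi x" "- (2*k)" "1 + real m"] a0)
    have a2: "(1 - phi x) powr (1 + 2*k) = (1 - phi x) powr (2*k) * (1 - phi x)"
      using p1 powr_add[of "1 - phi x" "2*k" 1] by (simp add: add.commute)
    show ?thesis
      unfolding exp_phi phi'_eq a1 a2 by (simp add: mult_ac)
  qed
  have "Jint m k = (sqrt 2 / 2) * (LINT x|lborel. phi x powr (real m + 1 - 2*k) * (1 - phi x) powr (1 + 2*k))"
    unfolding Jint_def pw by simp
  also have "\<dots> = (sqrt 2 / 2) * (Beta (real m + 1 - 2*k) (1 + 2*k) / (sqrt 2 / 2))"
    using assms by (subst phi_powr_integral(2)) auto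
  also have "\<dots> = Beta (real m + 1 - 2*k) (1 + 2*k)"
    by simp
  finally show ?thesis .
qed

lemma int_relations:
  assumes "-1 < 2*k" "2*k < 1"
  shows "0 < Jint 1 k"
    and "Iint k = (sqrt 2 / 2) * ((1 + 2*k) / 3) * Jint 1 k"
    and "Jint 2 k = (2 - 2*k) / 3 * Jint 1 k"
    and "Jint 3 k = (2 - 2*k) * (3 - 2*k) / 12 * Jint 1 k"
proof -
  define p where "p = 2*k"
  have p: "-1 < p" "p < 1" using assms unfolding p_def by auto
  have J1: "Jint 1 k = Beta (2 - p) (1 + p)" using Jint_Beta[OF assms, of 1] unfolding p_def by simp
  have J2: "Jint 2 k = Beta (3 - p) (1 + p)" using Jint_Beta[OF assms, of 2] unfolding p_def by simp
  have J3: "Jint 3 k = Beta (4 - p) (1 + p)" using Jint_Beta[OF assms, of 3] unfolding p_def by simp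
  have I: "Iint k = (sqrt 2 / 2) * Beta (2 - p) (2 + p)" using Iint_Beta[OF assms] unfolding p_def .
  show "0 < Jint 1 k" unfolding J1 using p by (intro Beta_pos) auto
  have r1: "(2 - p + (1 + p)) * Beta (2 - p) (1 + p + 1) = (1 + p) * Beta (2 - p) (1 + p)"
    by (rule Beta_plus1_right) (rule pos_not_nonpos_Int, use p in auto)
  have r2: "(2 - p + (1 + p)) * Beta (2 - p + 1) (1 + p) = (2 - p) * Beta (2 - p) (1 + p)"
    by (rule Beta_plus1_left) (rule pos_not_nonpos_Int, use p in auto)
  have r3: "(3 - p + (1 + p)) * Beta (3 - p + 1) (1 + p) = (3 - p) * Beta (3 - p) (1 + p)"
    by (rule Beta_plus1_left) (rule pos_not_nonpos_Int, use p in auto)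
  have e1: "1 + p + 1 = 2 + p" "2 - p + 1 = 3 - p" "3 - p + 1 = 4 - p" by auto
  show "Iint k = (sqrt 2 / 2) * ((1 + 2*k) / 3) * Jint 1 k"
    using r1 unfolding I J1 e1 p_def[symmetric] by simp
  show "Jint 2 k = (2 - 2*k) / 3 * Jint 1 k"
    using r2 unfolding J2 J1 e1 p_def[symmetric] by simp
  show "Jint 3 k = (2 - 2*k) * (3 - 2*k) / 12 * Jint 1 k"
  proof -
    have "4 * Beta (4 - p) (1 + p) = (3 - p) * Beta (3 - p) (1 + p)" using r3 unfolding e1 by simp
    moreover have "3 * Beta (3 - p) (1 + p) = (2 - p) * Beta (2 - p) (1 + p)" using r2 unfolding e1 by simp
    ultimately have "12 * Beta (4 - p) (1 + p) = (2 - p) * (3 - p) * Beta (2 - p) (1 + p)"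
    proof -
      assume A: "4 * Beta (4 - p) (1 + p) = (3 - p) * Beta (3 - p) (1 + p)"
         and B: "3 * Beta (3 - p) (1 + p) = (2 - p) * Beta (2 - p) (1 + p)"
      have "12 * Beta (4 - p) (1 + p) = 3 * (4 * Beta (4 - p) (1 + p))" by simp
      also have "\<dots> = (3 - p) * (3 * Beta (3 - p) (1 + p))" unfolding A by simp
      also have "\<dots> = (2 - p) * (3 - p) * Beta (2 - p) (1 + p)" unfolding B by simp
      finally show ?thesis .
    qed
    thus ?thesis unfolding J3 J1 p_def[symmetric] by simp
  qed
qed




lemma qb_mono: assumes "0 < r" "u1 \<le> u2" shows "q_b_of r u1 \<le> q_b_of r u2"
proof -
  have "(r + u1 - 2) / (r + 1/10) \<le> (r + u2 - 2) / (r + 1/10)"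
    by (rule divide_right_mono) (use assms in auto)
  hence "sqrt ((r + u1 - 2) / (r + 1/10)) \<le> sqrt ((r + u2 - 2) / (r + 1/10))"
    by simp
  thus ?thesis unfolding q_b_of_def by simp
qed

lemma qb_ge1: assumes "1 \<le> r" "6/5 \<le> u" shows "1 \<le> q_b_of r u"
proof -
  have "0 \<le> (r + u - 2) / (r + 1/10)" using assms by simp
  thus ?thesis unfolding q_b_of_def by simp
qed

lemma ub_ex1:
  assumes r: "1 \<le> r"
  shows "\<exists>!u. 6/5 < u \<and> u < 4/3 \<and> 2 - u + 2 * q_b_of r u * (1 - u) = 0"
proof -
  define h where "h u = 2 - u + 2 * q_b_of r u * (1 - u)" for u
  have rp: "0 < r + 1/10" using r by simp
  have q1: "q_b_of r (6/5) < 2"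
  proof -
    have "(r + 6/5 - 2) / (r + 1/10) < 1" using rp by (simp add: field_simps)
    hence "sqrt ((r + 6/5 - 2) / (r + 1/10)) < 1" by simp
    thus ?thesis unfolding q_b_of_def by simp
  qed
  have q2: "1 < q_b_of r (4/3)"
  proof -
    have "0 < (r + 4/3 - 2) / (r + 1/10)" using rp r by (simp add: field_simps)
    hence "0 < sqrt ((r + 4/3 - 2) / (r + 1/10))" by simp
    thus ?thesis unfolding q_b_of_def by simp
  qed
  have h1: "0 < h (6/5)" unfolding h_def using q1 by simp
  have h2: "h (4/3) < 0" unfolding h_def using q2 by simp
  have cont: "\<forall>x. 6/5 \<le> x \<and> x \<le> 4/3 \<longrightarrow> isCont h x"
    unfolding h_def q_b_of_def using rp by (intro allI impI continuous_intros) auto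
  obtain x where x: "6/5 \<le> x" "x \<le> 4/3" "h x = 0"
    using IVT2[of h "4/3" 0 "6/5", OF _ _ _ cont] h1 h2 by auto
  have "x \<noteq> 6/5"
  proof
    assume "x = 6/5" hence "h x = h (6/5)" by (rule arg_cong)
    thus False using x(3) h1 by linarith
  qed
  moreover have "x \<noteq> 4/3"
  proof
    assume "x = 4/3" hence "h x = h (4/3)" by (rule arg_cong)
    thus False using x(3) h2 by linarith
  qed
  ultimately have x': "6/5 < x" "x < 4/3" using x by auto
  have uniq: "u1 = u2" if "6/5 < u1" "u1 < 4/3" "h u1 = 0" "6/5 < u2" "u2 < 4/3" "h u2 = 0" for u1 u2
  proof (rule ccontr)
    assume ne: "u1 \<noteq> u2"
    have dec: "h b < h a" if "6/5 < a" "a < b" for a b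
    proof -
      have qa: "1 \<le> q_b_of r a" by (rule qb_ge1) (use that r in auto)
      have qab: "q_b_of r a \<le> q_b_of r b" using qb_mono[of r a b] that r by simp
      have "q_b_of r b * (1 - b) \<le> q_b_of r a * (1 - b)"
        using qab that by (intro mult_right_mono_neg) auto
      also have "\<dots> < q_b_of r a * (1 - a)"
        using qa that by (intro mult_strict_left_mono) auto
      finally show ?thesis unfolding h_def using that by simp
    qed
    show False
    proof (cases "u1 < u2")
      case True thus False using dec[of u1 u2] that by simp
    next
      case False hence "u2 < u1" using ne by simp
      thus False using dec[of u2 u1] that by simp
    qed
  qed
  show ?thesis
    using x' x(3) uniq unfolding h_def by blast
qed

lemma ub_props:
  assumes "1 \<le> r"
  shows "6/5 < u_b r" "u_b r < 4/3" "2 - u_b r + 2 * q_b_of r (u_b r) * (1 - u_b r) = 0"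
proof -
  have "6/5 < u_b r \<and> u_b r < 4/3 \<and> 2 - u_b r + 2 * q_b_of r (u_b r) * (1 - u_b r) = 0"
    unfolding u_b_def by (rule theI'[OF ub_ex1[OF assms]])
  thus "6/5 < u_b r" "u_b r < 4/3" "2 - u_b r + 2 * q_b_of r (u_b r) * (1 - u_b r) = 0" by auto
qed

lemma qbp_eq: "qbp r = q_b_of r (u_b r)"
  unfolding qbp_def q_b_of_def ..

lemma qbm_eq: "qbm r = 2 - qbp r"
  unfolding qbp_def qbm_def by simp

lemma qfm_eq: "qfm r = 2 - qfp r"
  unfolding qfp_def qfm_def by simp

lemma ub_formula: assumes "1 \<le> r" shows "u_b r = (2 + 2 * qbp r) / (1 + 2 * qbp r)"
proof -
  have q: "1 \<le> qbp r" unfolding qbp_eq by (rule qb_ge1) (use assms ub_props(1)[OF assms] in auto)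
  have "u_b r * (1 + 2 * qbp r) = 2 + 2 * qbp r"
    using ub_props(3)[OF assms] unfolding qbp_eq[symmetric] by (simp add: algebra_simps)
  thus ?thesis using q by (simp add: field_simps)
qed

lemma lim_qfp: "(qfp \<longlongrightarrow> 2) at_top"
  unfolding qfp_def by real_asymp

lemma lim_qfm: "(qfm \<longlongrightarrow> 0) at_top"
  unfolding qfm_def by real_asymp

lemma lim_qbp: "(qbp \<longlongrightarrow> 2) at_top"
proof (rule tendsto_sandwich[of "\<lambda>r. q_b_of r (6/5)" _ _ "\<lambda>r. q_b_of r (4/3)"])
  show "\<forall>\<^sub>F r in at_top. q_b_of r (6/5) \<le> qbp r"
    using eventually_ge_at_top[of "1::real"]
  proof eventually_elim
    case (elim r)
    thus ?case unfolding qbp_eq using qb_mono[of r "6/5" "u_b r"] ub_props(1)[of r] by simp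
  qed
  show "\<forall>\<^sub>F r in at_top. qbp r \<le> q_b_of r (4/3)"
    using eventually_ge_at_top[of "1::real"]
  proof eventually_elim
    case (elim r)
    thus ?case unfolding qbp_eq using qb_mono[of r "u_b r" "4/3"] ub_props(2)[of r] by simp
  qed
  show "((\<lambda>r. q_b_of r (6/5)) \<longlongrightarrow> 2) at_top" unfolding q_b_of_def by real_asymp
  show "((\<lambda>r. q_b_of r (4/3)) \<longlongrightarrow> 2) at_top" unfolding q_b_of_def by real_asymp
qed

lemma lim_qbm: "(qbm \<longlongrightarrow> 0) at_top"
proof -
  have "((\<lambda>r. 2 - qbp r) \<longlongrightarrow> 2 - 2) at_top" by (intro tendsto_intros lim_qbp)
  thus ?thesis unfolding qbm_eq[abs_def] by simp
qed

lemma lim_ub: "(u_b \<longlongrightarrow> 6/5) at_top"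
proof -
  have "((\<lambda>r. (2 + 2 * qbp r) / (1 + 2 * qbp r)) \<longlongrightarrow> (2 + 2 * 2) / (1 + 2 * 2)) at_top"
    by (intro tendsto_intros lim_qbp) simp
  hence "((\<lambda>r. (2 + 2 * qbp r) / (1 + 2 * qbp r)) \<longlongrightarrow> 6/5) at_top" by simp
  moreover have "\<forall>\<^sub>F r in at_top. (2 + 2 * qbp r) / (1 + 2 * qbp r) = u_b r"
    using eventually_ge_at_top[of "1::real"] by eventually_elim (simp add: ub_formula)
  ultimately show ?thesis by (rule Lim_transform_eventually)
qed




definition af :: "real \<Rightarrow> real" where "af r = (1/10) / (r + 1/10)"
definition ab :: "real \<Rightarrow> real" where "ab r = (u_b r - 21/10) / (r + 1/10)"
definition DD :: "real \<Rightarrow> real" where "DD r = (r + 1/10) * D0 r"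

definition Ff :: "real \<Rightarrow> real" where
  "Ff r = qfp r / 2 * sqrt 2 * (qfp r - 2 * qfm r) * (sqrt 2 / 2 * ((1 + 2 * kf r) / 3))
         + af r - 2 * qfp r * ((2 - 2 * kf r) / 3)
         + (qfp r)^2 * ((2 - 2 * kf r) * (3 - 2 * kf r) / 12)"
definition Cf :: "real \<Rightarrow> real" where "Cf r = sqrt 2 / 2 * ((1 + 2 * kf r) / 3)"
definition Kf :: "real \<Rightarrow> real" where
  "Kf r = - (qfp r * D0 r * sqrt 2 * (qfp r - 2 * qfm r)) / (2 * (mu0 r + 2))"
definition Hf :: "real \<Rightarrow> real" where
  "Hf r = - (qfp r * DD r * sqrt 2 * (qfp r - 2 * qfm r)) / (2 * (mu0 r + 2))"

definition Fb :: "real \<Rightarrow> real" where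
  "Fb r = - (qbp r / 2) * sqrt 2 * (qbp r - 2 * qbm r) * (sqrt 2 / 2 * ((1 + 2 * kb r) / 3))
         + ab r + 2 * qbp r * ((2 - 2 * kb r) / 3)
         - (qbp r)^2 * ((2 - 2 * kb r) * (3 - 2 * kb r) / 12)"
definition Cb :: "real \<Rightarrow> real" where "Cb r = sqrt 2 / 2 * ((1 + 2 * kb r) / 3)"
definition Kb :: "real \<Rightarrow> real" where
  "Kb r = - (qbp r * sqrt 2 * (qbp r - 2 * qbm r)) / (2 * (mu0 r + u_b r))"

lemma s2: "sqrt 2 * sqrt 2 = (2::real)" "sqrt 2 * (sqrt 2 * x) = 2 * (x::real)"
  by (simp_all add: mult.assoc[symmetric])

lemma kappa_range:
  assumes "0 < t" "t < 1"
  shows "-1 < 2 * kappa (1 + t) (1 - t)" "2 * kappa (1 + t) (1 - t) < 1"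
proof -
  have a: "0 < (1 - t) / (1 + t)" "(1 - t) / (1 + t) < 1" using assms by (auto simp: field_simps)
  show "-1 < 2 * kappa (1 + t) (1 - t)" "2 * kappa (1 + t) (1 - t) < 1"
    unfolding kappa_def using assms by (auto simp: field_simps)
qed

lemma kf_range:
  assumes "1 \<le> r"
  shows "-1 < 2 * kf r" "2 * kf r < 1"
proof -
  define t where "t = sqrt (r / (r + 1/10))"
  have t: "0 < t" "t < 1" unfolding t_def using assms by auto
  have e: "kf r = kappa (1 + t) (1 - t)" unfolding kf_def qfp_def qfm_def t_def ..
  show "-1 < 2 * kf r" "2 * kf r < 1" unfolding e using kappa_range[OF t] by auto
qed

lemma kb_range:
  assumes "1 \<le> r"
  shows "-1 < 2 * kb r" "2 * kb r < 1"
proof -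
  define t where "t = sqrt ((r + u_b r - 2) / (r + 1/10))"
  have u: "6/5 < u_b r" "u_b r < 4/3" using ub_props[OF assms] by auto
  have t: "0 < t" "t < 1" unfolding t_def using assms u by auto
  have e: "kb r = kappa (1 + t) (1 - t)" unfolding kb_def qbp_def qbm_def t_def ..
  show "-1 < 2 * kb r" "2 * kb r < 1" unfolding e using kappa_range[OF t] by auto
qed

lemma lin1: "A * (C * J) + B * J - D * (E * J) + F * (G * J) = (A * C + B - D * E + F * G) * (J::real)"
  by (simp add: algebra_simps)

lemma lin2: "A * (C * J) + B * J + D * (E * J) - F * (G * J) = (A * C + B + D * E - F * G) * (J::real)"
  by (simp add: algebra_simps)

lemma Mf_eq: assumes "1 \<le> r" shows "M_f r = Ff r * Jint 1 (kf r)"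
proof -
  note R = int_relations[OF kf_range[OF assms]]
  show ?thesis unfolding M_f_def Ff_def af_def R(2,3,4) by (rule lin1)
qed

lemma Mhatf_eq: assumes "1 \<le> r" shows "Mhat_f r = Kf r * (Cf r * Jint 1 (kf r))"
proof -
  note R = int_relations[OF kf_range[OF assms]]
  show ?thesis unfolding Mhat_f_def R(2) Kf_def[symmetric] Cf_def[symmetric] ..
qed

lemma Mb_eq: assumes "1 \<le> r" shows "M_b r = Fb r * Jint 1 (kb r)"
proof -
  note R = int_relations[OF kb_range[OF assms]]
  show ?thesis unfolding M_b_def Fb_def ab_def R(2,3,4) by (rule lin2)
qed

lemma Mhatb_eq: assumes "1 \<le> r" shows "Mhat_b r = Kb r * (Cb r * Jint 1 (kb r))"
proof -
  note R = int_relations[OF kb_range[OF assms]]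
  show ?thesis unfolding Mhat_b_def R(2) Kb_def[symmetric] Cb_def[symmetric] ..
qed

lemma gen_H: "- (a * (R * d) * s * x) / e = R * (- (a * d * s * x) / (e::real))"
  by (cases "e = 0") (simp_all add: field_simps)

lemma Mhat_eq: assumes "1 \<le> r"
  shows "Mhat r = Fb r / (Kb r * Cb r) - (r + 1/10) * (Ff r / (Hf r * Cf r))"
proof -
  have jf: "Jint 1 (kf r) \<noteq> 0" using int_relations(1)[OF kf_range[OF assms]] by simp
  have jb: "Jint 1 (kb r) \<noteq> 0" using int_relations(1)[OF kb_range[OF assms]] by simp
  have rp: "r + 1/10 \<noteq> 0" using assms by simp
  have H: "Hf r = (r + 1/10) * Kf r" unfolding Hf_def Kf_def DD_def by (rule gen_H)
  have "M_b r / Mhat_b r = Fb r / (Kb r * Cb r)"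
    unfolding Mb_eq[OF assms] Mhatb_eq[OF assms] using jb by simp
  moreover have "M_f r / Mhat_f r = (r + 1/10) * (Ff r / (Hf r * Cf r))"
    unfolding Mf_eq[OF assms] Mhatf_eq[OF assms] H using jf rp by simp
  ultimately show ?thesis unfolding Mhat_def by simp
qed




lemma lim_kf: "(kf \<longlongrightarrow> 1/2) at_top"
proof -
  have "((\<lambda>r. 1/2 - qfm r / qfp r) \<longlongrightarrow> 1/2 - 0/2) at_top"
    by (intro tendsto_intros lim_qfm lim_qfp) simp
  thus ?thesis unfolding kf_def kappa_def by simp
qed

lemma lim_kb: "(kb \<longlongrightarrow> 1/2) at_top"
proof -
  have "((\<lambda>r. 1/2 - qbm r / qbp r) \<longlongrightarrow> 1/2 - 0/2) at_top"
    by (intro tendsto_intros lim_qbm lim_qbp) simp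
  thus ?thesis unfolding kb_def kappa_def by simp
qed

lemma lim_af: "(af \<longlongrightarrow> 0) at_top"
  unfolding af_def by real_asymp

lemma lim_ab: "(ab \<longlongrightarrow> 0) at_top"
proof -
  have f: "filterlim (\<lambda>r::real. r + 1/10) at_infinity at_top"
    by (rule filterlim_at_top_imp_at_infinity) real_asymp
  have "((\<lambda>r. (u_b r - 21/10) / (r + 1/10)) \<longlongrightarrow> 0) at_top"
  proof (rule tendsto_divide_0[OF _ f])
    show "((\<lambda>r. u_b r - 21/10) \<longlongrightarrow> 6/5 - 21/10) at_top" by (intro tendsto_intros lim_ub)
  qed
  thus ?thesis unfolding ab_def[abs_def] .
qed

lemma lim_S: "(Sfun \<longlongrightarrow> 4) at_top"
proof -
  have "((\<lambda>r. (qfp r - 2 * qfm r) + (qbp r - 2 * qbm r)) \<longlongrightarrow> (2 - 2 * 0) + (2 - 2 * 0)) at_top"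
    by (intro tendsto_intros lim_qfm lim_qfp lim_qbm lim_qbp)
  thus ?thesis unfolding Sfun_def[abs_def] by simp
qed

lemma lim_mu0: "(mu0 \<longlongrightarrow> -8/5) at_top"
proof -
  have "((\<lambda>r. -2 + (2 - u_b r) * (qfp r - 2 * qfm r) / Sfun r) \<longlongrightarrow> -2 + (2 - 6/5) * (2 - 2 * 0) / 4) at_top"
    by (intro tendsto_intros lim_qfm lim_qfp lim_ub lim_S) simp
  thus ?thesis unfolding mu0_def[abs_def] by simp
qed

lemma cancel_gen: "R \<noteq> 0 \<Longrightarrow> R * (A / (R * B)) = A / (B::real)"
  by (cases "B = 0") (simp_all add: field_simps)

lemma lim_DD: "(DD \<longlongrightarrow> 2/25) at_top"
proof -
  have "((\<lambda>r. 2 * (2 - u_b r)^2 / (Sfun r)^2) \<longlongrightarrow> 2 * (2 - 6/5)^2 / 4^2) at_top"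
    by (intro tendsto_intros lim_ub lim_S) simp
  hence a: "((\<lambda>r. 2 * (2 - u_b r)^2 / (Sfun r)^2) \<longlongrightarrow> 2/25) at_top" by (simp add: power2_eq_square)
  have "\<forall>\<^sub>F r in at_top. 2 * (2 - u_b r)^2 / (Sfun r)^2 = DD r"
    using eventually_ge_at_top[of "1::real"]
  proof eventually_elim
    case (elim r)
    hence "r + 1/10 \<noteq> 0" by simp
    thus ?case unfolding DD_def D0_def by (rule cancel_gen[symmetric])
  qed
  from Lim_transform_eventually[OF a this] show ?thesis .
qed

lemma lim_Yf: "((\<lambda>r. Ff r / (Hf r * Cf r)) \<longlongrightarrow> -5/2) at_top"
  unfolding Ff_def Hf_def Cf_def
  by (rule tendsto_eq_intros lim_qfp lim_qfm lim_kf lim_af lim_DD lim_mu0 refl | simp add: s2)+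

lemma lim_Xb: "((\<lambda>r. Fb r / (Kb r * Cb r)) \<longlongrightarrow> -1/5) at_top"
  unfolding Fb_def Kb_def Cb_def
  by (rule tendsto_eq_intros lim_qbp lim_qbm lim_kb lim_ab lim_ub lim_mu0 refl | simp add: s2)+

theorem theorem2:
  shows "\<exists>r0 > 0. \<forall>r > r0. Mhat r \<noteq> 0"
proof -
  have ev: "\<forall>\<^sub>F r in at_top. 1 \<le> r \<and> -1 < Fb r / (Kb r * Cb r) \<and> Ff r / (Hf r * Cf r) < -1"
  proof -
    have e1: "\<forall>\<^sub>F r in at_top. -1 < Fb r / (Kb r * Cb r)"
      by (rule order_tendstoD(1)[OF lim_Xb]) simp
    have e2: "\<forall>\<^sub>F r in at_top. Ff r / (Hf r * Cf r) < -1"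
      by (rule order_tendstoD(2)[OF lim_Yf]) simp
    show ?thesis using eventually_ge_at_top[of "1::real"] e1 e2
      by eventually_elim auto
  qed
  then obtain N where N: "\<And>r. N \<le> r \<Longrightarrow> 1 \<le> r \<and> -1 < Fb r / (Kb r * Cb r) \<and> Ff r / (Hf r * Cf r) < -1"
    unfolding eventually_at_top_linorder by blast
  show ?thesis
  proof (intro exI[of _ "max 1 N"] conjI allI impI)
    show "0 < max 1 N" by simp
    fix r assume "max 1 N < r"
    hence "N \<le> r" by simp
    note h = N[OF this]
    have rp: "0 < r + 1/10" using h by simp
    have "(r + 1/10) * (Ff r / (Hf r * Cf r)) < (r + 1/10) * (-1)"
      using h rp by (intro mult_strict_left_mono) auto
    hence B: "(r + 1/10) * (Ff r / (Hf r * Cf r)) < - (r + 1/10)" by simp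
    have A: "-1 < Fb r / (Kb r * Cb r)" "1 \<le> r" using h by auto
    have "0 < Mhat r" unfolding Mhat_eq[OF A(2)] using A B by linarith
    thus "Mhat r \<noteq> 0" by simp
  qed
qed


end
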